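(* There are absolute constants $c_1,c_2\ge0$ such that the following holds. Let $\mathcal{A}$ be any (online or offline, deterministic) algorithm for the online stochastic rewards problem that makes each offer before learning its outcome, fix a resource $i$ and outcomes $\omega_{-i}$ of all edges not incident to $i$, and let $\tau(\mathcal{A})$ be the sum of $p_{it}$ over all arrivals $t$ to which $\mathcal{A}$ offers $i$ when every offer of $i$ fails (and other outcomes are given by $\omega_{-i}$). If $\tau(\mathcal{A})>0$, then $$\frac{\Pr\big[\mathcal{A}\text{ successfully matches } i\,\big|\,\omega_{-i}\big]}{1-e^{-\tau(\mathcal{A})}}\in\big[1-c_1\sqrt{p_{\max}},\,1+c_2\sqrt{p_{\max}}\big],$$ where the probability is over the independent outcomes of edges incident to $i$ and $p_{\max}=\max_{(i',t')\in E}p_{i't'}$.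
   Context: Online stochastic rewards problem: bipartite graph $G=(I,T,E)$, resources $i\in I$ with unit capacity, arrivals $t\in T$ with edge probabilities $p_{it}\in[0,1]$; each arrival is offered at most one available neighbour; the offer of $i$ to $t$ succeeds with probability $p_{it}$ independently of all else, making $i$ unavailable; a failed offer leaves $i$ available. $\omega_{-i}$ denotes a fixed realization of the outcomes of all edges not incident to $i$. *)

theory Defs
  imports "HOL-Probability.Probability"
begin

text \<open>A history is the list of offers
  made so far, each recorded as (resource, arrival, outcome) with outcome True = success.
  A deterministic (online or offline) algorithm is an adaptive rule: given the history
  of previous offers and their outcomes it chooses the next offer (or stops).  Hence
  every offer is chosen before its outcome is learnt.\<close>

type_synonym hist = "(nat \<times> nat \<times> bool) list"

definition offered_arrivals :: "hist \<Rightarrow> nat set" where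
  "offered_arrivals h = {t. \<exists>r b. (r, t, b) \<in> set h}"

definition matched_in :: "hist \<Rightarrow> nat \<Rightarrow> bool" where
  "matched_in h r \<longleftrightarrow> (\<exists>t. (r, t, True) \<in> set h)"

definition valid_alg :: "(nat \<times> nat) set \<Rightarrow> (hist \<Rightarrow> (nat \<times> nat) option) \<Rightarrow> bool" where
  "valid_alg E alg \<longleftrightarrow>
     (\<forall>h r t. alg h = Some (r, t) \<longrightarrow>
        (r, t) \<in> E \<and> t \<notin> offered_arrivals h \<and> \<not> matched_in h r)"

text \<open>Execution of the algorithm under a full outcome realization \<omega> (\<omega> r t = True
  iff the offer of r to t would succeed).\<close>
primrec run :: "(hist \<Rightarrow> (nat \<times> nat) option) \<Rightarrow> (nat \<Rightarrow> nat \<Rightarrow> bool) \<Rightarrow> nat \<Rightarrow> hist" where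
  "run alg \<omega> 0 = []"
| "run alg \<omega> (Suc n) =
     (let h = run alg \<omega> n in
      case alg h of None \<Rightarrow> h | Some (r, t) \<Rightarrow> h @ [(r, t, \<omega> r t)])"

text \<open>Since each arrival is offered at most once, card T steps suffice.\<close>
definition final_hist :: "(hist \<Rightarrow> (nat \<times> nat) option) \<Rightarrow> (nat \<Rightarrow> nat \<Rightarrow> bool) \<Rightarrow> nat set \<Rightarrow> hist" where
  "final_hist alg \<omega> T = run alg \<omega> (card T)"

definition tau :: "(hist \<Rightarrow> (nat \<times> nat) option) \<Rightarrow> (nat \<Rightarrow> nat \<Rightarrow> bool) \<Rightarrow> nat set
                   \<Rightarrow> (nat \<Rightarrow> nat \<Rightarrow> real) \<Rightarrow> nat \<Rightarrow> real" where
  "tau alg \<omega>0 T p i =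
     (\<Sum>t \<in> {t. (i, t, False) \<in> set (final_hist alg (\<omega>0(i := (\<lambda>_. False))) T)}. p i t)"

definition prob_match :: "(hist \<Rightarrow> (nat \<times> nat) option) \<Rightarrow> (nat \<Rightarrow> nat \<Rightarrow> bool) \<Rightarrow> nat set
                   \<Rightarrow> (nat \<times> nat) set \<Rightarrow> (nat \<Rightarrow> nat \<Rightarrow> real) \<Rightarrow> nat \<Rightarrow> real" where
  "prob_match alg \<omega>0 T E p i =
     measure_pmf.prob (Pi_pmf {t. (i, t) \<in> E} False (\<lambda>t. bernoulli_pmf (p i t)))
       {x. matched_in (final_hist alg (\<omega>0(i := x)) T) i}"

definition p_max :: "(nat \<times> nat) set \<Rightarrow> (nat \<Rightarrow> nat \<Rightarrow> real) \<Rightarrow> real" where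
  "p_max E p = Max ((\<lambda>(r, t). p r t) ` E)"

end

theory Submission
  imports Defs
begin

lemma run_prefix: "\<exists>ys. run alg \<omega> (Suc n) = run alg \<omega> n @ ys"
  by (auto simp: Let_def split: option.splits)

lemma run_mono: "set (run alg \<omega> n) \<subseteq> set (run alg \<omega> (Suc n))"
  using run_prefix[of alg \<omega> n] by auto

lemma run_mono_le: "m \<le> n \<Longrightarrow> set (run alg \<omega> m) \<subseteq> set (run alg \<omega> n)"
  by (induction n rule: dec_induct) (use run_mono in blast)+

lemma runA:
  assumes "\<forall>t. (i, t, False) \<in> set (run alg (\<omega>0(i := \<lambda>_. False)) n) \<longrightarrow> \<not> x t"
  shows "run alg (\<omega>0(i := x)) n = run alg (\<omega>0(i := \<lambda>_. False)) n"
  using assms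
proof (induction n)
  case 0 then show ?case by simp
next
  case (Suc n)
  have IH: "run alg (\<omega>0(i := x)) n = run alg (\<omega>0(i := \<lambda>_. False)) n"
    using Suc.IH Suc.prems run_mono by blast
  show ?case
  proof (cases "alg (run alg (\<omega>0(i := \<lambda>_. False)) n)")
    case None then show ?thesis by (simp only: run.simps Let_def IH) simp
  next
    case (Some a)
    obtain r t where a: "a = (r, t)" by force
    show ?thesis
    proof (cases "r = i")
      case True
      then have "(i, t, False) \<in> set (run alg (\<omega>0(i := \<lambda>_. False)) (Suc n))"
        using Some a by simp
      then have "\<not> x t" using Suc.prems by blast
      then show ?thesis using Some a True by (simp only: run.simps Let_def IH) simp
    next
      case False
      then show ?thesis using Some a by (simp only: run.simps Let_def IH) simp
    qed
  qed
qed

lemma runB: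
  "(\<exists>t. (i, t, False) \<in> set (run alg (\<omega>0(i := \<lambda>_. False)) n) \<and> x t)
   \<longleftrightarrow> matched_in (run alg (\<omega>0(i := x)) n) i"
proof (induction n)
  case 0 then show ?case by (simp add: matched_in_def)
next
  case (Suc n)
  let ?f = "run alg (\<omega>0(i := \<lambda>_. False))"
  let ?g = "run alg (\<omega>0(i := x))"
  show ?case
  proof (cases "\<exists>t. (i, t, False) \<in> set (?f n) \<and> x t")
    case True
    then have "matched_in (?g n) i" using Suc.IH by blast
    then have "matched_in (?g (Suc n)) i"
      using run_mono[of alg "\<omega>0(i := x)" n] unfolding matched_in_def by blast
    then show ?thesis using True run_mono[of alg "\<omega>0(i := \<lambda>_. False)" n] by blast
  next
    case False
    then have eq: "?g n = ?f n" using runA[of i alg \<omega>0 n x] by blast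
    have nm: "\<not> matched_in (?g n) i" using Suc.IH False by blast
    show ?thesis
    proof (cases "alg (?f n)")
      case None then show ?thesis using eq False nm by (simp only: run.simps Let_def eq) simp
    next
      case (Some a)
      obtain r t where a: "a = (r, t)" by force
      show ?thesis
      proof (cases "r = i")
        case True
        then show ?thesis using Some a eq False nm
          by (simp only: run.simps Let_def eq) (auto simp: matched_in_def)
      next
        case ne: False
        then show ?thesis using Some a eq False nm
          by (simp only: run.simps Let_def eq) (auto simp: matched_in_def)
      qed
    qed
  qed
qed

lemma run_edges:
  assumes "valid_alg E alg" "(r, t, b) \<in> set (run alg \<omega> n)"
  shows "(r, t) \<in> E"
  using assms(2)
proof (induction n)
  case 0 then show ?case by simp
next
  case (Suc n)
  then show ?case using assms(1) unfolding valid_alg_def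
    by (auto simp: Let_def split: option.splits)
qed

lemma prod_ge_one_minus_sum:
  fixes q :: "nat \<Rightarrow> real"
  assumes "finite S" "\<forall>t\<in>S. 0 \<le> q t \<and> q t \<le> 1"
  shows "1 - sum q S \<le> (\<Prod>t\<in>S. 1 - q t)"
  using assms
proof (induction S rule: finite_induct)
  case empty then show ?case by simp
next
  case (insert a S)
  have h: "1 - sum q S \<le> (\<Prod>t\<in>S. 1 - q t)" using insert by blast
  have qa: "0 \<le> q a" "q a \<le> 1" using insert.prems by auto
  have s0: "0 \<le> sum q S" using insert.prems by (intro sum_nonneg) auto
  have "1 - sum q (insert a S) = 1 - q a - sum q S" using insert by simp
  also have "\<dots> \<le> (1 - q a) * (1 - sum q S)" using qa s0 by (simp add: algebra_simps)
  also have "\<dots> \<le> (1 - q a) * (\<Prod>t\<in>S. 1 - q t)" using h qa by (intro mult_left_mono) auto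
  finally show ?case using insert by simp
qed

lemma prod_le_exp:
  fixes q :: "nat \<Rightarrow> real"
  assumes "finite S" "\<forall>t\<in>S. 0 \<le> q t \<and> q t \<le> 1"
  shows "(\<Prod>t\<in>S. 1 - q t) \<le> exp (- sum q S)"
proof -
  have "(\<Prod>t\<in>S. 1 - q t) \<le> (\<Prod>t\<in>S. exp (- q t))"
    using assms by (intro prod_mono) (smt (verit) exp_ge_add_one_self)
  also have "\<dots> = exp (- sum q S)" using assms(1) by (simp add: exp_sum sum_negf[symmetric])
  finally show ?thesis .
qed

lemma prod_ge_exp:
  fixes q :: "nat \<Rightarrow> real"
  assumes "finite S" "\<forall>t\<in>S. 0 \<le> q t \<and> q t \<le> pm" "pm \<le> 1/2"
  shows "exp (- ((1 + 2 * pm) * sum q S)) \<le> (\<Prod>t\<in>S. 1 - q t)"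
proof -
  have "exp (- ((1 + 2 * pm) * sum q S)) = (\<Prod>t\<in>S. exp (- ((1 + 2*pm) * q t)))"
    using assms(1) by (simp add: exp_sum sum_negf[symmetric] sum_distrib_left)
  also have "\<dots> \<le> (\<Prod>t\<in>S. 1 - q t)"
  proof (intro prod_mono conjI)
    fix t assume t: "t \<in> S"
    have q: "0 \<le> q t" "q t \<le> pm" using assms t by auto
    have l: "- q t - 2 * (q t)\<^sup>2 \<le> ln (1 - q t)"
      using q assms by (intro ln_one_minus_pos_lower_bound) auto
    have "- ((1 + 2*pm) * q t) \<le> - q t - 2 * (q t)\<^sup>2"
      using q by (simp add: power2_eq_square algebra_simps mult_right_mono)
    then have "exp (- ((1 + 2*pm) * q t)) \<le> exp (ln (1 - q t))" using l by simp
    also have "\<dots> = 1 - q t" using q assms by simp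
    finally show "exp (- ((1 + 2*pm) * q t)) \<le> 1 - q t" .
  qed auto
  finally show ?thesis .
qed

lemma exp_scale:
  fixes a y :: real
  assumes "a \<ge> 1" "y \<ge> 0"
  shows "1 - exp (- (a * y)) \<le> a * (1 - exp (- y))"
proof -
  have c: "convex_on UNIV exp" by (rule exp_convex)
  have "exp ((1/a) * (- (a * y)) + (1 - 1/a) * 0) \<le> (1/a) * exp (- (a * y)) + (1 - 1/a) * exp 0"
    using convex_onD[OF c, of "1 - 1/a" "- (a * y)" 0] assms by (simp add: field_simps)
  moreover have "(1/a) * (- (a * y)) + (1 - 1/a) * 0 = - y" using assms by simp
  ultimately have "exp (- y) \<le> (1/a) * exp (- (a * y)) + (1 - 1/a)" by simp
  then have "a * exp (- y) \<le> a * ((1/a) * exp (- (a * y)) + (1 - 1/a))"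
    using assms by (intro mult_left_mono) auto
  also have "\<dots> = exp (- (a * y)) + a - 1" using assms by (simp add: algebra_simps)
  finally show ?thesis by (simp add: algebra_simps)
qed

lemma ratio_bound:
  fixes q :: "nat \<Rightarrow> real"
  assumes "finite S" "\<forall>t\<in>S. 0 \<le> q t \<and> q t \<le> pm" "pm \<le> 1" "sum q S > 0"
  shows "1 \<le> (1 - (\<Prod>t\<in>S. 1 - q t)) / (1 - exp (- sum q S))"
    and "(1 - (\<Prod>t\<in>S. 1 - q t)) / (1 - exp (- sum q S)) \<le> 1 + 2 * sqrt pm"
proof -
  let ?s = "sum q S" and ?P = "(\<Prod>t\<in>S. 1 - q t)"
  have q1: "\<forall>t\<in>S. 0 \<le> q t \<and> q t \<le> 1" using assms by force
  have d: "0 < 1 - exp (- ?s)" using assms by simp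
  have pm0: "0 \<le> pm" proof -
    have "S \<noteq> {}" using assms(4) by auto
    then obtain t where "t \<in> S" by blast
    then show ?thesis using assms(2) by force
  qed
  show "1 \<le> (1 - ?P) / (1 - exp (- ?s))"
    using prod_le_exp[OF assms(1) q1] d by simp
  show "(1 - ?P) / (1 - exp (- ?s)) \<le> 1 + 2 * sqrt pm"
  proof (cases "pm \<le> 1/2")
    case True
    have "1 - ?P \<le> 1 - exp (- ((1 + 2 * pm) * ?s))"
      using prod_ge_exp[OF assms(1) assms(2) True] by simp
    also have "\<dots> \<le> (1 + 2*pm) * (1 - exp (- ?s))"
      using pm0 assms by (intro exp_scale) auto
    also have "\<dots> \<le> (1 + 2 * sqrt pm) * (1 - exp (- ?s))"
    proof -
      have "pm \<le> sqrt pm" proof -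
        have a: "sqrt pm \<le> 1" "0 \<le> sqrt pm" using pm0 assms(3) by auto
        have "pm = sqrt pm * sqrt pm" using pm0 by simp
        also have "\<dots> \<le> 1 * sqrt pm" using a by (intro mult_right_mono) auto
        finally show ?thesis by simp
      qed
      then show ?thesis using d by (intro mult_right_mono) auto
    qed
    finally show ?thesis using d by (simp add: divide_le_eq)
  next
    case False
    have sq: "1 \<le> 2 * sqrt pm"
    proof -
      have "sqrt (1/4) \<le> sqrt pm" using False by simp
      moreover have "sqrt (1/4) = (1/2::real)" by (simp add: real_sqrt_divide)
      ultimately show ?thesis by simp
    qed
    have P0: "0 \<le> ?P" using q1 by (intro prod_nonneg) auto
    have e: "exp (- ?s) \<le> 1 / (1 + ?s)"
    proof -
      have "1 + ?s \<le> exp ?s" by (rule exp_ge_add_one_self)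
      then show ?thesis using assms by (simp add: exp_minus field_simps)
    qed
    have "1 - ?P \<le> 2 * (1 - exp (- ?s))"
    proof (cases "?s \<le> 1")
      case True
      have "1 - ?P \<le> ?s" using prod_ge_one_minus_sum[OF assms(1) q1] by simp
      also have "\<dots> \<le> 2 * (1 - 1 / (1 + ?s))" using True assms(4) by (simp add: field_simps)
      also have "\<dots> \<le> 2 * (1 - exp (- ?s))" using e by simp
      finally show ?thesis .
    next
      case False
      have "1 - ?P \<le> 1" using P0 by simp
      also have "\<dots> \<le> 2 * (1 - 1 / (1 + ?s))" using False by (simp add: field_simps)
      also have "\<dots> \<le> 2 * (1 - exp (- ?s))" using e by simp
      finally show ?thesis .
    qed
    also have "\<dots> \<le> (1 + 2 * sqrt pm) * (1 - exp (- ?s))"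
      using sq d by (intro mult_right_mono) auto
    finally show ?thesis using d by (simp add: divide_le_eq)
  qed
qed

lemma main_bound:
  assumes fin: "finite I" "finite T" and ET: "E \<subseteq> I \<times> T"
    and pr: "\<forall>(r, t) \<in> E. 0 \<le> p r t \<and> p r t \<le> 1"
    and va: "valid_alg E alg" and tpos: "tau alg \<omega>0 T p i > 0"
  shows "prob_match alg \<omega>0 T E p i / (1 - exp (- tau alg \<omega>0 T p i))
         \<in> {1 - 0 * sqrt (p_max E p) .. 1 + 2 * sqrt (p_max E p)}"
proof -
  define S where "S = {t. (i, t, False) \<in> set (final_hist alg (\<omega>0(i := (\<lambda>_. False))) T)}"
  define A where "A = {t. (i, t) \<in> E}"
  have SA: "S \<subseteq> A" unfolding S_def A_def final_hist_def using run_edges[OF va] by blast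
  have AT: "A \<subseteq> T" unfolding A_def using ET by blast
  have finA: "finite A" using AT fin(2) finite_subset by blast
  have finS: "finite S" using SA finA finite_subset by blast
  have finE: "finite E" using ET fin finite_subset by blast
  have tau_eq: "tau alg \<omega>0 T p i = sum (p i) S" unfolding tau_def S_def by simp
  have ev: "{x. matched_in (final_hist alg (\<omega>0(i := x)) T) i} =
            UNIV - Pi A (\<lambda>t. if t \<in> S then {False} else UNIV)"
  proof -
    have m: "matched_in (final_hist alg (\<omega>0(i := x)) T) i \<longleftrightarrow> (\<exists>t\<in>S. x t)" for x
      using runB[of i alg \<omega>0 "card T" x] unfolding final_hist_def S_def by auto
    have "(\<exists>t\<in>S. x t) \<longleftrightarrow> x \<notin> Pi A (\<lambda>t. if t \<in> S then {False} else UNIV)" for x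
      using SA unfolding Pi_def by auto
    then show ?thesis using m by auto
  qed
  have bern: "measure_pmf.prob (bernoulli_pmf (p i t)) (if t \<in> S then {False} else UNIV)
              = (if t \<in> S then 1 - p i t else 1)" if "t \<in> A" for t
  proof (cases "t \<in> S")
    case True
    have "0 \<le> p i t" "p i t \<le> 1" using pr that unfolding A_def by auto
    then show ?thesis using True by (simp add: measure_pmf_single)
  qed simp
  have "measure_pmf.prob (Pi_pmf A False (\<lambda>t. bernoulli_pmf (p i t)))
          (Pi A (\<lambda>t. if t \<in> S then {False} else UNIV))
        = (\<Prod>t\<in>A. measure_pmf.prob (bernoulli_pmf (p i t)) (if t \<in> S then {False} else UNIV))"
    using finA by (rule measure_Pi_pmf_Pi)
  also have "\<dots> = (\<Prod>t\<in>A. (if t \<in> S then 1 - p i t else 1))"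
    using bern by (rule prod.cong[OF refl])
  also have "\<dots> = (\<Prod>t\<in>S. 1 - p i t)"
    using finA SA by (simp add: prod.If_cases Int_absorb1 Int_commute)
  finally have pi_eq: "measure_pmf.prob (Pi_pmf A False (\<lambda>t. bernoulli_pmf (p i t)))
          (Pi A (\<lambda>t. if t \<in> S then {False} else UNIV)) = (\<Prod>t\<in>S. 1 - p i t)" .
  have pm_eq: "prob_match alg \<omega>0 T E p i = 1 - (\<Prod>t\<in>S. 1 - p i t)"
    unfolding prob_match_def A_def[symmetric] ev
    using measure_pmf.prob_compl[of "Pi A (\<lambda>t. if t \<in> S then {False} else UNIV)"
        "Pi_pmf A False (\<lambda>t. bernoulli_pmf (p i t))"] pi_eq by simp
  have Sne: "S \<noteq> {}" using tpos tau_eq by auto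
  have Ene: "E \<noteq> {}" using Sne SA A_def by blast
  have qb: "\<forall>t\<in>S. 0 \<le> p i t \<and> p i t \<le> p_max E p"
  proof
    fix t assume t: "t \<in> S"
    then have e: "(i, t) \<in> E" using SA A_def by blast
    then have "0 \<le> p i t" using pr by auto
    moreover have "p i t \<le> p_max E p" unfolding p_max_def
      using finE e by (intro Max_ge) force+
    ultimately show "0 \<le> p i t \<and> p i t \<le> p_max E p" by simp
  qed
  have pm1: "p_max E p \<le> 1" unfolding p_max_def
    using finE Ene pr by (intro Max.boundedI) auto
  have "sum (p i) S > 0" using tpos tau_eq by simp
  from ratio_bound[OF finS qb pm1 this]
  show ?thesis unfolding pm_eq tau_eq by simp
qed

theorem lemma8:
  shows "\<exists>c1 c2 :: real. c1 \<ge> 0 \<and> c2 \<ge> 0 \<and>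
    (\<forall>(I :: nat set) (T :: nat set) (E :: (nat \<times> nat) set) (p :: nat \<Rightarrow> nat \<Rightarrow> real)
       (alg :: hist \<Rightarrow> (nat \<times> nat) option) (\<omega>0 :: nat \<Rightarrow> nat \<Rightarrow> bool) (i :: nat).
       finite I \<and> finite T \<and> E \<subseteq> I \<times> T \<and>
       (\<forall>(r, t) \<in> E. 0 \<le> p r t \<and> p r t \<le> 1) \<and>
       valid_alg E alg \<and> i \<in> I \<and> tau alg \<omega>0 T p i > 0 \<longrightarrow>
       prob_match alg \<omega>0 T E p i / (1 - exp (- tau alg \<omega>0 T p i))
         \<in> {1 - c1 * sqrt (p_max E p) .. 1 + c2 * sqrt (p_max E p)})"
  apply (rule exI[of _ 0], rule exI[of _ 2])
  using main_bound by auto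

end
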